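(* Let $L$ be an atomic $0$-distributive lattice with at least three atoms. Then $\operatorname{sdim}_M(G^c(L))$ is finite if and only if $G^c(L)$ is finite.
   Context: A lattice $L$ with $0$ is $0$-distributive if $a\wedge b=0$ and $a\wedge c=0$ imply $a\wedge(b\vee c)=0$; atomic means every nonzero element lies above an atom. $Z^*(L)=\{a\in L\setminus\{0\}:\ a\wedge b=0\text{ for some } b\neq 0\}$; $G^c(L)$ has vertex set $Z^*(L)$, distinct $a,b$ adjacent iff $a\wedge b\neq 0$ (connected under these hypotheses). For a connected graph $G$, a vertex $w$ strongly resolves $u,v$ if some shortest $u$–$w$ path contains $v$ or some shortest $v$–$w$ path contains $u$; a strong resolving set is a set $W$ such that every pair of distinct vertices is strongly resolved by some vertex of $W$; $\operatorname{sdim}_M(G)$ is the minimum cardinality of a strong resolving set. *)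

theory Defs
  imports Main "HOL-Library.Extended_Nat"
begin

definition zero_distributive :: "'a::bounded_lattice_bot itself \<Rightarrow> bool" where
  "zero_distributive _ \<longleftrightarrow>
     (\<forall>a b c::'a. inf a b = bot \<and> inf a c = bot \<longrightarrow> inf a (sup b c) = bot)"

definition is_atom :: "'a::bounded_lattice_bot \<Rightarrow> bool" where
  "is_atom a \<longleftrightarrow> a \<noteq> bot \<and> (\<forall>x. x \<le> a \<longrightarrow> x = bot \<or> x = a)"

definition atomic_lattice :: "'a::bounded_lattice_bot itself \<Rightarrow> bool" where
  "atomic_lattice _ \<longleftrightarrow> (\<forall>x::'a. x \<noteq> bot \<longrightarrow> (\<exists>a. is_atom a \<and> a \<le> x))"

definition Zstar :: "'a::bounded_lattice_bot set" where
  "Zstar = {a. a \<noteq> bot \<and> (\<exists>b. b \<noteq> bot \<and> inf a b = bot)}"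

text \<open>Adjacency of the graph G^c(L) on vertex set Zstar.\<close>
definition Gc_adj :: "'a::bounded_lattice_bot \<Rightarrow> 'a \<Rightarrow> bool" where
  "Gc_adj a b \<longleftrightarrow> a \<noteq> b \<and> inf a b \<noteq> bot"

definition gpath :: "'v set \<Rightarrow> ('v \<Rightarrow> 'v \<Rightarrow> bool) \<Rightarrow> 'v list \<Rightarrow> bool" where
  "gpath V E p \<longleftrightarrow> p \<noteq> [] \<and> set p \<subseteq> V \<and> (\<forall>i. Suc i < length p \<longrightarrow> E (p!i) (p!Suc i))"

definition gpath_from_to :: "'v set \<Rightarrow> ('v \<Rightarrow> 'v \<Rightarrow> bool) \<Rightarrow> 'v \<Rightarrow> 'v \<Rightarrow> 'v list \<Rightarrow> bool" where
  "gpath_from_to V E u v p \<longleftrightarrow> gpath V E p \<and> hd p = u \<and> last p = v"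

text \<open>Distance (number of edges of a shortest path); meaningful for connected graphs.\<close>
definition gdist :: "'v set \<Rightarrow> ('v \<Rightarrow> 'v \<Rightarrow> bool) \<Rightarrow> 'v \<Rightarrow> 'v \<Rightarrow> nat" where
  "gdist V E u v = (LEAST n. \<exists>p. gpath_from_to V E u v p \<and> length p = Suc n)"

definition shortest_path :: "'v set \<Rightarrow> ('v \<Rightarrow> 'v \<Rightarrow> bool) \<Rightarrow> 'v \<Rightarrow> 'v \<Rightarrow> 'v list \<Rightarrow> bool" where
  "shortest_path V E u v p \<longleftrightarrow> gpath_from_to V E u v p \<and> length p = Suc (gdist V E u v)"

definition strongly_resolves :: "'v set \<Rightarrow> ('v \<Rightarrow> 'v \<Rightarrow> bool) \<Rightarrow> 'v \<Rightarrow> 'v \<Rightarrow> 'v \<Rightarrow> bool" where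
  "strongly_resolves V E w u v \<longleftrightarrow>
     (\<exists>p. shortest_path V E u w p \<and> v \<in> set p) \<or> (\<exists>p. shortest_path V E v w p \<and> u \<in> set p)"

definition strong_resolving_set :: "'v set \<Rightarrow> ('v \<Rightarrow> 'v \<Rightarrow> bool) \<Rightarrow> 'v set \<Rightarrow> bool" where
  "strong_resolving_set V E W \<longleftrightarrow> W \<subseteq> V \<and>
     (\<forall>u\<in>V. \<forall>v\<in>V. u \<noteq> v \<longrightarrow> (\<exists>w\<in>W. strongly_resolves V E w u v))"

definition sdimM :: "'v set \<Rightarrow> ('v \<Rightarrow> 'v \<Rightarrow> bool) \<Rightarrow> enat" where
  "sdimM V E = (INF W \<in> {W. strong_resolving_set V E W}. (if finite W then enat (card W) else \<infinity>))"

end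

theory Submission
  imports Defs
begin

lemma gdist_le:
  assumes "gpath_from_to V E u v p"
  shows "gdist V E u v \<le> length p - 1"
proof -
  have "p \<noteq> []" using assms by (simp add: gpath_from_to_def gpath_def)
  then have "\<exists>q. gpath_from_to V E u v q \<and> length q = Suc (length p - 1)"
    using assms by (intro exI[of _ p]) auto
  then show ?thesis unfolding gdist_def by (rule Least_le)
qed

lemma shortest_exists:
  assumes "gpath_from_to V E u v p"
  shows "\<exists>q. shortest_path V E u v q"
proof -
  have "p \<noteq> []" using assms by (simp add: gpath_from_to_def gpath_def)
  then have "\<exists>q. gpath_from_to V E u v q \<and> length q = Suc (length p - 1)"
    using assms by (intro exI[of _ p]) auto
  then have "\<exists>n. \<exists>q. gpath_from_to V E u v q \<and> length q = Suc n" by blast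
  then have "\<exists>q. gpath_from_to V E u v q \<and> length q = Suc (gdist V E u v)"
    unfolding gdist_def by (rule LeastI_ex)
  then show ?thesis by (auto simp: shortest_path_def)
qed

lemma path_single: "x \<in> V \<Longrightarrow> gpath_from_to V E x x [x]"
  by (simp add: gpath_from_to_def gpath_def)

lemma path_snoc:
  assumes "gpath_from_to V E x y p" "z \<in> V" "E y z"
  shows "gpath_from_to V E x z (p @ [z])"
proof -
  have p: "p \<noteq> []" "set p \<subseteq> V" "\<forall>i. Suc i < length p \<longrightarrow> E (p!i) (p!Suc i)" "hd p = x" "last p = y"
    using assms(1) by (auto simp: gpath_from_to_def gpath_def)
  have "E ((p@[z])!i) ((p@[z])!Suc i)" if "Suc i < length (p@[z])" for i
  proof (cases "Suc i < length p")
    case True then show ?thesis using p(3) by (simp add: nth_append)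
  next
    case False
    then have "Suc i = length p" using that by simp
    then have "(p@[z])!i = last p" "(p@[z])!Suc i = z" using p(1)
    proof -
      have "i = length p - 1" using \<open>Suc i = length p\<close> by simp
      then show "(p@[z])!i = last p" using p(1) by (simp add: nth_append last_conv_nth)
      show "(p@[z])!Suc i = z" using \<open>Suc i = length p\<close> by (simp add: nth_append)
    qed
    then show ?thesis using p(5) assms(3) by simp
  qed
  then show ?thesis using p assms(2) by (auto simp: gpath_from_to_def gpath_def)
qed

lemma path_step:
  assumes "gpath_from_to V E x y p" "length p \<le> Suc n" "z \<in> V" "y = z \<or> E y z"
  shows "\<exists>q. gpath_from_to V E x z q \<and> length q \<le> Suc (Suc n)"
  using assms path_snoc[OF assms(1) assms(3)] by force

lemma resolves_dist:
  assumes "shortest_path V E u w p" "v \<in> set p" "u \<noteq> v"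
  shows "gdist V E v w < gdist V E u w"
proof -
  have g: "gpath_from_to V E u w p" and len: "length p = Suc (gdist V E u w)"
    using assms(1) by (auto simp: shortest_path_def)
  have p: "p \<noteq> []" "set p \<subseteq> V" "\<forall>i. Suc i < length p \<longrightarrow> E (p!i) (p!Suc i)" "hd p = u" "last p = w"
    using g by (auto simp: gpath_from_to_def gpath_def)
  obtain i where i: "i < length p" "p!i = v" using assms(2) by (auto simp: in_set_conv_nth)
  have "i \<noteq> 0" using i p(1,4) assms(3) by (metis hd_conv_nth)
  let ?q = "drop i p"
  have "gpath_from_to V E v w ?q"
    unfolding gpath_from_to_def gpath_def
  proof (intro conjI allI impI)
    show "?q \<noteq> []" using i by simp
    show "set ?q \<subseteq> V" using p(2) by (meson order_trans set_drop_subset)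
    show "E (?q!j) (?q!Suc j)" if "Suc j < length ?q" for j
      using p(3)[rule_format, of "i+j"] that i by (simp add: nth_drop)
    show "hd ?q = v" using i by (simp add: hd_drop_conv_nth)
    show "last ?q = w" using i p(5) by simp
  qed
  then have "gdist V E v w \<le> length ?q - 1" by (rule gdist_le)
  then show ?thesis using len \<open>i \<noteq> 0\<close> i by simp
qed

lemma finite_graph_if_resolving:
  assumes conn: "\<forall>x\<in>V. \<forall>y\<in>V. \<exists>p. gpath_from_to V E x y p \<and> length p \<le> Suc K"
    and W: "strong_resolving_set V E W" "finite W"
  shows "finite V"
proof -
  let ?f = "\<lambda>u w. if w \<in> W then gdist V E u w else 0"
  have inj: "inj_on ?f V"
  proof (rule inj_onI, rule ccontr)
    fix u v assume uv: "u \<in> V" "v \<in> V" "?f u = ?f v" "u \<noteq> v"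
    then obtain w where w: "w \<in> W" "strongly_resolves V E w u v"
      using W(1) uv unfolding strong_resolving_set_def by blast
    have "?f u w = ?f v w" using uv(3) by (rule fun_cong)
    then have "gdist V E u w = gdist V E v w" using w(1) by simp
    moreover have "gdist V E v w < gdist V E u w \<or> gdist V E u w < gdist V E v w"
      using w(2) resolves_dist uv(4) unfolding strongly_resolves_def by metis
    ultimately show False by simp
  qed
  have "?f ` V \<subseteq> {g. \<forall>x. (x \<in> W \<longrightarrow> g x \<in> {..K}) \<and> (x \<notin> W \<longrightarrow> g x = 0)}"
  proof
    fix g assume "g \<in> ?f ` V"
    then obtain u where u: "u \<in> V" "g = ?f u" by blast
    have "gdist V E u w \<le> K" if "w \<in> W" for w
    proof -
      have "w \<in> V" using that W(1) by (auto simp: strong_resolving_set_def)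
      then obtain p where "gpath_from_to V E u w p" "length p \<le> Suc K" using conn u(1) by blast
      then show ?thesis using gdist_le by fastforce
    qed
    then show "g \<in> {g. \<forall>x. (x \<in> W \<longrightarrow> g x \<in> {..K}) \<and> (x \<notin> W \<longrightarrow> g x = 0)}" using u by auto
  qed
  moreover have "finite {g. \<forall>x. (x \<in> W \<longrightarrow> g x \<in> {..K::nat}) \<and> (x \<notin> W \<longrightarrow> g x = 0)}"
    using W(2) by (intro finite_set_of_finite_funs) auto
  ultimately have "finite (?f ` V)" by (rule finite_subset)
  then show ?thesis using inj finite_imageD by blast
qed

lemma V_resolving:
  assumes conn: "\<forall>x\<in>V. \<forall>y\<in>V. \<exists>p. gpath_from_to V E x y p"
  shows "strong_resolving_set V E V"
  unfolding strong_resolving_set_def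
proof (intro conjI ballI impI)
  fix u v assume uv: "u \<in> V" "v \<in> V" "u \<noteq> v"
  obtain p where "gpath_from_to V E v u p" using conn uv by blast
  then obtain q where q: "shortest_path V E v u q" using shortest_exists by metis
  then have "u \<in> set q"
    by (auto simp: shortest_path_def gpath_from_to_def gpath_def)
  then show "\<exists>w\<in>V. strongly_resolves V E w u v"
    using q uv(1) unfolding strongly_resolves_def by blast
qed simp

lemma sdim_fin:
  "sdimM V E \<noteq> \<infinity> \<longleftrightarrow> (\<exists>W. strong_resolving_set V E W \<and> finite W)"
proof
  assume "sdimM V E \<noteq> \<infinity>"
  then show "\<exists>W. strong_resolving_set V E W \<and> finite W"
    unfolding sdimM_def top_enat_def[symmetric] INF_top_conv
    by (auto split: if_splits simp: top_enat_def)
next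
  assume "\<exists>W. strong_resolving_set V E W \<and> finite W"
  then obtain W where W: "strong_resolving_set V E W" "finite W" by blast
  have "sdimM V E \<le> enat (card W)"
    unfolding sdimM_def using W by (metis (mono_tags, lifting) INF_lower mem_Collect_eq)
  then show "sdimM V E \<noteq> \<infinity>" by (cases "sdimM V E") auto
qed

lemma atoms_disj:
  fixes a c :: "'a::bounded_lattice_bot"
  assumes "is_atom a" "is_atom c" "a \<noteq> c"
  shows "inf a c = bot"
proof -
  have "inf a c \<le> a" by simp
  then have "inf a c = bot \<or> inf a c = a" using assms(1) by (simp add: is_atom_def)
  moreover have "inf a c = a \<Longrightarrow> a = c"
    using assms(2) assms(1) unfolding is_atom_def by (metis inf.orderI)
  ultimately show ?thesis using assms(3) by blast
qed

lemma atom_Zstar: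
  fixes a :: "'a::bounded_lattice_bot"
  assumes "is_atom a" "is_atom b" "a \<noteq> b"
  shows "a \<in> Zstar"
  using assms atoms_disj[OF assms] unfolding Zstar_def is_atom_def by blast

lemma Gc_conn:
  fixes u v :: "'a::bounded_lattice_bot"
  assumes zd: "zero_distributive TYPE('a::bounded_lattice_bot)"
    and at: "atomic_lattice TYPE('a)"
    and three: "\<exists>a b c::'a. is_atom a \<and> is_atom b \<and> is_atom c \<and> a \<noteq> b \<and> a \<noteq> c \<and> b \<noteq> c"
    and uv: "u \<in> Zstar" "v \<in> Zstar"
  shows "\<exists>p. gpath_from_to Zstar Gc_adj u v p \<and> length p \<le> Suc 4"
proof -
  obtain a where a: "is_atom a" "a \<le> u" using at uv(1) unfolding atomic_lattice_def Zstar_def by blast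
  obtain b where b: "is_atom b" "b \<le> v" using at uv(2) unfolding atomic_lattice_def Zstar_def by blast
  obtain c where c: "is_atom c" "c \<noteq> a" "c \<noteq> b" using three by metis
  obtain d where d: "is_atom d" "d \<noteq> a" using three by metis
  obtain e where e: "is_atom e" "e \<noteq> b" using three by metis
  have aZ: "a \<in> Zstar" using atom_Zstar[OF a(1) d(1)] d(2) by metis
  have bZ: "b \<in> Zstar" using atom_Zstar[OF b(1) e(1)] e(2) by metis
  have ca: "inf c a = bot" using atoms_disj[OF c(1) a(1)] c(2) by simp
  have cb: "inf c b = bot" using atoms_disj[OF c(1) b(1)] c(3) by simp
  have "inf c (sup a b) = bot" using zd ca cb unfolding zero_distributive_def by blast
  moreover have "sup a b \<noteq> bot" using a(1) unfolding is_atom_def by (metis bot_unique sup_ge1)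
  moreover have "c \<noteq> bot" using c(1) by (simp add: is_atom_def)
  ultimately have abZ: "sup a b \<in> Zstar" unfolding Zstar_def by (auto simp: inf_commute)
  have an: "a \<noteq> bot" using a(1) by (simp add: is_atom_def)
  have bn: "b \<noteq> bot" using b(1) by (simp add: is_atom_def)
  have s0: "gpath_from_to Zstar Gc_adj u u [u]" using uv(1) by (rule path_single)
  have "u = a \<or> Gc_adj u a" using a(2) an unfolding Gc_adj_def by (simp add: inf_absorb2)
  from path_step[OF s0 _ aZ this, of 0] obtain p1 where
    p1: "gpath_from_to Zstar Gc_adj u a p1" "length p1 \<le> Suc 1" by auto
  have "a = sup a b \<or> Gc_adj a (sup a b)" using an unfolding Gc_adj_def by (simp add: inf_absorb1)
  from path_step[OF p1 abZ this] obtain p2 where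
    p2: "gpath_from_to Zstar Gc_adj u (sup a b) p2" "length p2 \<le> Suc 2" by auto
  have "sup a b = b \<or> Gc_adj (sup a b) b" using bn unfolding Gc_adj_def by (simp add: inf_absorb2)
  from path_step[OF p2 bZ this] obtain p3 where
    p3: "gpath_from_to Zstar Gc_adj u b p3" "length p3 \<le> Suc 3" by auto
  have "b = v \<or> Gc_adj b v" using b(2) bn unfolding Gc_adj_def by (simp add: inf_absorb1)
  from path_step[OF p3 uv(2) this] obtain p4 where
    p4: "gpath_from_to Zstar Gc_adj u v p4" "length p4 \<le> Suc 4" by auto
  then show ?thesis by blast
qed

theorem corollary3p3:
  assumes "zero_distributive TYPE('a::bounded_lattice_bot)"
    and "atomic_lattice TYPE('a)"
    and "\<exists>a b c::'a. is_atom a \<and> is_atom b \<and> is_atom c \<and> a \<noteq> b \<and> a \<noteq> c \<and> b \<noteq> c"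
  shows "sdimM (Zstar :: 'a set) Gc_adj \<noteq> \<infinity> \<longleftrightarrow> finite (Zstar :: 'a set)"
proof
  have conn: "\<forall>x\<in>(Zstar :: 'a set). \<forall>y\<in>Zstar. \<exists>p. gpath_from_to Zstar Gc_adj x y p \<and> length p \<le> Suc 4"
    using Gc_conn[OF assms] by blast
  assume "sdimM (Zstar :: 'a set) Gc_adj \<noteq> \<infinity>"
  then obtain W where "strong_resolving_set (Zstar :: 'a set) Gc_adj W" "finite W"
    using sdim_fin by blast
  then show "finite (Zstar :: 'a set)" using finite_graph_if_resolving[OF conn] by blast
next
  have conn: "\<forall>x\<in>(Zstar :: 'a set). \<forall>y\<in>Zstar. \<exists>p. gpath_from_to Zstar Gc_adj x y p"
    using Gc_conn[OF assms] by blast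
  assume "finite (Zstar :: 'a set)"
  then show "sdimM (Zstar :: 'a set) Gc_adj \<noteq> \<infinity>"
    using V_resolving[OF conn] sdim_fin by blast
qed

end
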